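(* Let $K$ and $L$ be fields and let $\sigma_1,\ldots,\sigma_n\colon K\to L$ be field monomorphisms. Suppose that $$\sum_{g\in S_n}\prod_{i=1}^n\sigma_{g(i)}(x_i)=0\quad\text{for all }x_1,\ldots,x_n\in K.$$ Then $\operatorname{char}K=p>0$ and there exist indices $1\le i_1<\cdots<i_p\le n$ with $\sigma_{i_1}=\cdots=\sigma_{i_p}$. *)

theory Defs
  imports "HOL-Combinatorics.Permutations"
begin

definition field_mono :: "('k::field \<Rightarrow> 'l::field) \<Rightarrow> bool" where
  "field_mono f \<longleftrightarrow> f 1 = 1 \<and> (\<forall>x y. f (x + y) = f x + f y)
     \<and> (\<forall>x y. f (x * y) = f x * f y) \<and> inj f"

end

theory Submission
  imports Defs
begin

lemma dedekind:
  fixes F :: "('k::field \<Rightarrow> 'l::field) set"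
  assumes "finite F" "\<forall>f\<in>F. f 1 = 1 \<and> (\<forall>x y. f (x*y) = f x * f y)"
    "\<forall>t. (\<Sum>f\<in>F. f t * d f) = 0"
  shows "\<forall>f\<in>F. d f = 0"
  using assms
proof (induction F arbitrary: d rule: finite_induct)
  case empty
  then show ?case by simp
next
  case (insert f0 F)
  have h: "f0 t * d f0 + (\<Sum>f\<in>F. f t * d f) = 0" for t
    using insert(1,2,5) by (simp add: sum.insert)
  have mult: "\<And>f x y. f \<in> insert f0 F \<Longrightarrow> f (x*y) = f x * f y" using insert(4) by blast
  have z: "\<forall>f\<in>F. (f s - f0 s) * d f = 0" for s
  proof -
    have "\<forall>t. (\<Sum>f\<in>F. f t * ((f s - f0 s) * d f)) = 0"
    proof
      fix t
      have m: "\<And>f. f \<in> insert f0 F \<Longrightarrow> f (s*t) = f s * f t" using mult by blast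
      have e1: "(\<Sum>f\<in>F. f (s*t) * d f) = (\<Sum>f\<in>F. f s * f t * d f)"
        by (rule sum.cong) (auto simp: m)
      have "(\<Sum>f\<in>F. f t * ((f s - f0 s) * d f)) = (\<Sum>f\<in>F. f s * f t * d f - f0 s * (f t * d f))"
        by (rule sum.cong) (auto simp: algebra_simps)
      also have "\<dots> = (\<Sum>f\<in>F. f (s*t) * d f) - f0 s * (\<Sum>f\<in>F. f t * d f)"
        by (simp only: e1 sum_subtractf sum_distrib_left)
      also have "\<dots> = - f0 (s*t) * d f0 + f0 s * (f0 t * d f0)"
        by (simp flip: h[of "s*t", folded neg_eq_iff_add_eq_0] h[of t, folded neg_eq_iff_add_eq_0])
      also have "\<dots> = 0" using m[of f0] by (simp add: algebra_simps)
      finally show "(\<Sum>f\<in>F. f t * ((f s - f0 s) * d f)) = 0" .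
    qed
    then show ?thesis using insert(3)[of "\<lambda>f. (f s - f0 s) * d f"] insert(4) by blast
  qed
  have dF: "\<forall>f\<in>F. d f = 0"
  proof
    fix f assume "f \<in> F"
    then have "f \<noteq> f0" using insert(2) by blast
    then obtain s where "f s \<noteq> f0 s" by blast
    then show "d f = 0" using z[of s] \<open>f \<in> F\<close> by auto
  qed
  have "d f0 = 0" using h[of 1] insert(4) dF by simp
  with dF show ?case by blast
qed


lemma mono_of_nat:
  assumes "field_mono (f :: 'k::field \<Rightarrow> 'l::field)"
  shows "f (of_nat m) = of_nat m"
proof -
  have add: "\<And>x y. f (x+y) = f x + f y" and one: "f 1 = 1" using assms by (auto simp: field_mono_def)
  have "f 0 + 0 = f 0 + f 0" using add[of 0 0] by simp
  then have "f 0 = 0" by (metis add_left_cancel)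
  then show ?thesis by (induction m) (simp_all add: add one)
qed

lemma main:
  fixes \<sigma> :: "nat \<Rightarrow> 'k::field \<Rightarrow> 'l::field" and A :: "nat set"
  assumes "finite A" "\<forall>i\<in>A. field_mono (\<sigma> i)"
    "\<forall>x::nat\<Rightarrow>'k. (\<Sum>g | g permutes A. \<Prod>i\<in>A. \<sigma> (g i) (x i)) = 0"
  shows "CHAR('k) > 0 \<and> (\<exists>I\<subseteq>A. card I = CHAR('k) \<and> (\<forall>i\<in>I. \<forall>j\<in>I. \<sigma> i = \<sigma> j))"
  using assms
proof (induction A rule: finite_remove_induct)
  case empty
  have "{g. g permutes ({}::nat set)} = {id}" by auto
  then show ?case using empty by simp
next
  case (remove A)
  obtain a where a: "a \<in> A" using remove.hyps(2) by blast
  let ?B = "A - {a}"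
  define c where "c j x = (\<Sum>g | g permutes A \<and> g a = j. \<Prod>i\<in>?B. \<sigma> (g i) (x i))" for j x
  have expand: "(\<Sum>g | g permutes A. \<Prod>i\<in>A. \<sigma> (g i) (x i)) = (\<Sum>j\<in>A. \<sigma> j (x a) * c j x)" for x
  proof -
    have "(\<Sum>g | g permutes A. \<Prod>i\<in>A. \<sigma> (g i) (x i))
        = (\<Sum>g | g permutes A. \<sigma> (g a) (x a) * (\<Prod>i\<in>?B. \<sigma> (g i) (x i)))"
      by (rule sum.cong) (auto simp: prod.remove[OF remove.hyps(1) a])
    also have "\<dots> = (\<Sum>j\<in>A. \<Sum>g\<in>{g. g \<in> {g. g permutes A} \<and> g a = j}. \<sigma> (g a) (x a) * (\<Prod>i\<in>?B. \<sigma> (g i) (x i)))"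
      by (rule sum.group[symmetric]) (auto simp: finite_permutations remove.hyps(1) permutes_in_image a)
    also have "\<dots> = (\<Sum>j\<in>A. \<sigma> j (x a) * c j x)"
      unfolding c_def by (rule sum.cong) (auto simp: sum_distrib_left intro!: sum.cong)
    finally show ?thesis .
  qed
  have cindep: "c j (x(a:=t)) = c j x" for j x t
    unfolding c_def by (intro sum.cong prod.cong) auto
  have cswap: "c j x = c a x" if j: "j \<in> A" "\<sigma> j = \<sigma> a" for j x
  proof -
    have sw: "\<sigma> (transpose a j y) = \<sigma> y" for y
      using j by (auto simp: transpose_def)
    show ?thesis unfolding c_def
    proof (rule sum.reindex_bij_witness[of _ "\<lambda>g. transpose a j \<circ> g" "\<lambda>g. transpose a j \<circ> g"])
      fix g assume "g \<in> {g. g permutes A \<and> g a = a}"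
      then show "transpose a j \<circ> g \<in> {g. g permutes A \<and> g a = j}"
        using j a by (auto intro: permutes_compose permutes_swap_id)
    next
      fix g assume "g \<in> {g. g permutes A \<and> g a = j}"
      then show "transpose a j \<circ> g \<in> {g. g permutes A \<and> g a = a}"
        using j a by (auto intro: permutes_compose permutes_swap_id)
    next
      fix g
      show "(\<Prod>i\<in>?B. \<sigma> ((transpose a j \<circ> g) i) (x i)) = (\<Prod>i\<in>?B. \<sigma> (g i) (x i))"
        by (simp add: sw)
    qed (auto simp: fun_eq_iff)
  qed
  have perm_eq: "(g permutes A \<and> g a = a) \<longleftrightarrow> g permutes ?B" for g
  proof
    assume "g permutes A \<and> g a = a"
    then show "g permutes ?B" unfolding permutes_def by auto
  next
    assume g: "g permutes ?B"
    then have "g permutes A" by (rule permutes_subset) auto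
    moreover have "g a = a" using g by (rule permutes_not_in) auto
    ultimately show "g permutes A \<and> g a = a" by blast
  qed
  have csub: "c a x = (\<Sum>g | g permutes ?B. \<Prod>i\<in>?B. \<sigma> (g i) (x i))" for x
    unfolding c_def using perm_eq by simp
  define J where "J = {j\<in>A. \<sigma> j = \<sigma> a}"
  have mult: "\<forall>f\<in>\<sigma> ` A. f 1 = 1 \<and> (\<forall>x y. f (x*y) = f x * f y)"
    using remove.prems(1) by (auto simp: field_mono_def)
  have key: "of_nat (card J) * c a x = 0" for x
  proof -
    define d where "d f = (\<Sum>j\<in>{j\<in>A. \<sigma> j = f}. c j x)" for f
    have "\<forall>t. (\<Sum>f\<in>\<sigma> ` A. f t * d f) = 0"
    proof
      fix t
      have "(\<Sum>f\<in>\<sigma> ` A. f t * d f) = (\<Sum>f\<in>\<sigma> ` A. \<Sum>j\<in>{j\<in>A. \<sigma> j = f}. \<sigma> j t * c j x)"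
        unfolding d_def sum_distrib_left by (intro sum.cong) auto
      also have "\<dots> = (\<Sum>j\<in>A. \<sigma> j t * c j x)"
        by (rule sum.group) (auto simp: remove.hyps(1))
      also have "\<dots> = 0"
        using remove.prems(2) expand[of "x(a:=t)"] cindep by simp
      finally show "(\<Sum>f\<in>\<sigma> ` A. f t * d f) = 0" .
    qed
    then have "d (\<sigma> a) = 0"
      using dedekind[OF _ mult, of d] remove.hyps(1) a by blast
    moreover have "d (\<sigma> a) = (\<Sum>j\<in>J. c a x)"
      unfolding d_def J_def by (intro sum.cong) (auto simp: cswap)
    ultimately show ?thesis by simp
  qed
  have finJ: "finite J" and JA: "J \<subseteq> A" and aJ: "a \<in> J" using remove.hyps(1) a by (auto simp: J_def)
  show ?case
  proof (cases "of_nat (card J) = (0::'l)")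
    case True
    have fm: "field_mono (\<sigma> a)" using remove.prems(1) a by blast
    have "\<sigma> a (of_nat (card J)) = \<sigma> a 0"
      using True mono_of_nat[OF fm, of "card J"] mono_of_nat[OF fm, of 0] by simp
    then have "of_nat (card J) = (0::'k)" using fm by (auto simp: field_mono_def inj_def)
    then have dv: "CHAR('k) dvd card J" by (simp add: of_nat_eq_0_iff_char_dvd)
    have cJ: "card J > 0" using finJ aJ by (auto simp: card_gt_0_iff)
    then have pos: "CHAR('k) > 0" using dv by (cases "CHAR('k) = 0") auto
    have "CHAR('k) \<le> card J" using dv cJ by (simp add: dvd_imp_le)
    then obtain I where "I \<subseteq> J" "card I = CHAR('k)" by (meson obtain_subset_with_card_n)
    moreover have "\<forall>i\<in>J. \<forall>j\<in>J. \<sigma> i = \<sigma> j" by (simp add: J_def)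
    ultimately show ?thesis using pos JA by (intro conjI exI[of _ I]) blast+
  next
    case False
    then have "\<forall>x. (\<Sum>g | g permutes ?B. \<Prod>i\<in>?B. \<sigma> (g i) (x i)) = 0"
      using key csub by simp
    then have "CHAR('k) > 0 \<and> (\<exists>I\<subseteq>?B. card I = CHAR('k) \<and> (\<forall>i\<in>I. \<forall>j\<in>I. \<sigma> i = \<sigma> j))"
      using remove.IH[OF a] remove.prems(1) by blast
    then show ?thesis by blast
  qed
qed

theorem lemma3p1:
  fixes \<sigma> :: "nat \<Rightarrow> 'k::field \<Rightarrow> 'l::field" and n :: nat
  assumes mono: "\<And>i. i \<in> {1..n} \<Longrightarrow> field_mono (\<sigma> i)"
    and vanish: "\<And>x :: nat \<Rightarrow> 'k.
        (\<Sum>g | g permutes {1..n}. \<Prod>i = 1..n. \<sigma> (g i) (x i)) = 0"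
  shows "CHAR('k) > 0 \<and>
    (\<exists>I \<subseteq> {1..n}. card I = CHAR('k) \<and> (\<forall>i \<in> I. \<forall>j \<in> I. \<sigma> i = \<sigma> j))"
  using main[of "{1..n}" \<sigma>] mono vanish by blast

end
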